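(* Let $H$ be a finite graph (possibly with loops), and let $c\geq 1$ and $t\geq 0$ be integers. If the exponential graph $\mathcal{E}_c(H)$ admits a proper coloring with $c+t$ colors, then $\mathcal{E}_c(H)$ has a suited $(c+t)$-coloring.
   Context: All graphs have no multiple edges but may have loops. For a finite graph $H$ and integer $c\ge 1$, two maps $\phi_1,\phi_2: V(H)\to[c]$ are co-proper if $\phi_1(u)\neq\phi_2(v)$ whenever $u\sim v$ in $H$ (for a loop at $u$ this includes the pair $u=v$). The exponential graph $\mathcal{E}_c(H)$ has vertex set $[c]^{V(H)}$, two maps $\phi_1,\phi_2$ being adjacent iff they are co-proper (a map co-proper with itself has a loop). A proper $(c+t)$-coloring $\Psi: V(\mathcal{E}_c(H))\to[c+t]$ assigns distinct colors to adjacent maps (so no proper coloring exists if there is a loop). The colors $1,\dots,c$ are called primary and $c+1,\dots,c+t$ secondary. A proper $(c+t)$-coloring $\Psi$ of $\mathcal{E}_c(H)$ is suited if for every $\phi\in V(\mathcal{E}_c(H))$, $\Psi(\phi)\in \operatorname{im}(\phi)\cup\{c+1,\dots,c+t\}$. *)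

theory Defs
  imports Main "HOL-Library.FuncSet"
begin

text \<open>A finite graph H (loops allowed, no multiple edges) is given by a finite vertex
set V and a symmetric adjacency relation E on V; E u u means a loop at u.\<close>

definition graph :: "'v set \<Rightarrow> ('v \<Rightarrow> 'v \<Rightarrow> bool) \<Rightarrow> bool" where
  "graph V E \<longleftrightarrow> finite V \<and> (\<forall>u v. E u v \<longrightarrow> u \<in> V \<and> v \<in> V) \<and> (\<forall>u v. E u v \<longrightarrow> E v u)"

definition exp_vertices :: "'v set \<Rightarrow> nat \<Rightarrow> ('v \<Rightarrow> nat) set" where
  "exp_vertices V c = V \<rightarrow>\<^sub>E {1..c}"

definition co_proper :: "'v set \<Rightarrow> ('v \<Rightarrow> 'v \<Rightarrow> bool) \<Rightarrow> ('v \<Rightarrow> nat) \<Rightarrow> ('v \<Rightarrow> nat) \<Rightarrow> bool" where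
  "co_proper V E \<phi>1 \<phi>2 \<longleftrightarrow> (\<forall>u\<in>V. \<forall>v\<in>V. E u v \<longrightarrow> \<phi>1 u \<noteq> \<phi>2 v)"

text \<open>Adjacency in E_c(H) (a map co-proper with itself has a loop).\<close>
definition exp_adj :: "'v set \<Rightarrow> ('v \<Rightarrow> 'v \<Rightarrow> bool) \<Rightarrow> nat \<Rightarrow> ('v \<Rightarrow> nat) \<Rightarrow> ('v \<Rightarrow> nat) \<Rightarrow> bool" where
  "exp_adj V E c \<phi>1 \<phi>2 \<longleftrightarrow> \<phi>1 \<in> exp_vertices V c \<and> \<phi>2 \<in> exp_vertices V c \<and> co_proper V E \<phi>1 \<phi>2"

definition proper_exp_coloring ::
  "'v set \<Rightarrow> ('v \<Rightarrow> 'v \<Rightarrow> bool) \<Rightarrow> nat \<Rightarrow> nat \<Rightarrow> (('v \<Rightarrow> nat) \<Rightarrow> nat) \<Rightarrow> bool" where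
  "proper_exp_coloring V E c k \<Psi> \<longleftrightarrow>
     (\<forall>\<phi>\<in>exp_vertices V c. \<Psi> \<phi> \<in> {1..k}) \<and>
     (\<forall>\<phi>1 \<phi>2. exp_adj V E c \<phi>1 \<phi>2 \<longrightarrow> \<Psi> \<phi>1 \<noteq> \<Psi> \<phi>2)"

definition suited_coloring ::
  "'v set \<Rightarrow> ('v \<Rightarrow> 'v \<Rightarrow> bool) \<Rightarrow> nat \<Rightarrow> nat \<Rightarrow> (('v \<Rightarrow> nat) \<Rightarrow> nat) \<Rightarrow> bool" where
  "suited_coloring V E c t \<Psi> \<longleftrightarrow>
     proper_exp_coloring V E c (c + t) \<Psi> \<and>
     (\<forall>\<phi>\<in>exp_vertices V c. \<Psi> \<phi> \<in> \<phi> ` V \<union> {c+1..c+t})"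

end

theory Submission
  imports Defs
begin

theorem lemma3:
  fixes V :: "'v set" and E :: "'v \<Rightarrow> 'v \<Rightarrow> bool" and c t :: nat
  assumes "graph V E" and "c \<ge> 1"
    and "\<exists>\<Psi>. proper_exp_coloring V E c (c + t) \<Psi>"
  shows "\<exists>\<Psi>. suited_coloring V E c t \<Psi>"
proof -
  obtain \<Psi> where P: "proper_exp_coloring V E c (c + t) \<Psi>" using assms(3) by blast
  have rng: "\<And>\<phi>. \<phi> \<in> exp_vertices V c \<Longrightarrow> \<Psi> \<phi> \<in> {1..c+t}"
    using P unfolding proper_exp_coloring_def by blast
  have prp: "\<And>\<phi>1 \<phi>2. exp_adj V E c \<phi>1 \<phi>2 \<Longrightarrow> \<Psi> \<phi>1 \<noteq> \<Psi> \<phi>2"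
    using P unfolding proper_exp_coloring_def by blast
  define K where "K i = restrict (\<lambda>_. i) V" for i :: nat
  have Kv: "K i \<in> exp_vertices V c" if "i \<in> {1..c}" for i
    using that unfolding K_def exp_vertices_def by auto
  define f where "f i = \<Psi> (K i)" for i
  have finj: "inj_on f {1..c}"
  proof (rule inj_onI)
    fix i j assume i: "i \<in> {1..c}" and j: "j \<in> {1..c}" and e: "f i = f j"
    show "i = j"
    proof (rule ccontr)
      assume "i \<noteq> j"
      then have "exp_adj V E c (K i) (K j)"
        using Kv[OF i] Kv[OF j] unfolding exp_adj_def co_proper_def K_def by auto
      then show False using prp e unfolding f_def by blast
    qed
  qed
  define A where "A = f ` {1..c}"
  have AS: "A \<subseteq> {1..c+t}" unfolding A_def f_def using rng Kv by auto
  have cA: "card A = c" unfolding A_def using finj card_image by fastforce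
  have c2: "card ({1..c+t} - A) = card {c+1..c+t}"
    using AS cA by (simp add: card_Diff_subset finite_subset)
  obtain h where h: "bij_betw h ({1..c+t} - A) {c+1..c+t}"
    using finite_same_card_bij[OF _ _ c2] by blast
  have hr: "h x \<in> {c+1..c+t}" if "x \<in> {1..c+t}" "x \<notin> A" for x
  proof -
    have "x \<in> {1..c+t} - A" using that by simp
    then show ?thesis using bij_betwE[OF h] by simp
  qed
  define \<pi> where "\<pi> x = (if x \<in> A then the_inv_into {1..c} f x else h x)" for x
  have piA: "\<pi> (f i) = i" if "i \<in> {1..c}" for i
    using that finj unfolding \<pi>_def A_def by (auto simp: the_inv_into_f_f)
  have pa: "\<pi> x \<in> {1..c} \<and> f (\<pi> x) = x" if xa: "x \<in> A" for x
  proof -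
    obtain i where i: "i \<in> {1..c}" "x = f i" using xa unfolding A_def by blast
    have "\<pi> x = i" using piA[OF i(1)] i(2) by simp
    then show ?thesis using i by simp
  qed
  have pb: "\<pi> x = h x \<and> h x \<in> {c+1..c+t}" if "x \<in> {1..c+t}" "x \<notin> A" for x
    using hr[OF that] that(2) unfolding \<pi>_def by simp
  have hinj: "inj_on h ({1..c+t} - A)" using h bij_betw_imp_inj_on by blast
  have pirng: "\<pi> x \<in> {1..c+t}" if "x \<in> {1..c+t}" for x
  proof (cases "x \<in> A")
    case True
    then show ?thesis using pa[OF True] by simp
  next
    case False
    then show ?thesis using pb[OF that False] by simp
  qed
  have piinj: "inj_on \<pi> {1..c+t}"
  proof (rule inj_onI)
    fix x y assume x: "x \<in> {1..c+t}" and y: "y \<in> {1..c+t}" and e: "\<pi> x = \<pi> y"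
    show "x = y"
    proof (cases "x \<in> A")
      case True
      note X = pa[OF True]
      show ?thesis
      proof (cases "y \<in> A")
        case True
        note Y = pa[OF True]
        show ?thesis using X Y e by metis
      next
        case False
        note Y = pb[OF y False]
        have "\<pi> x \<le> c" "\<pi> y > c" using X Y by auto
        then show ?thesis using e by simp
      qed
    next
      case False
      note X = pb[OF x False]
      show ?thesis
      proof (cases "y \<in> A")
        case True
        note Y = pa[OF True]
        have "\<pi> y \<le> c" "\<pi> x > c" using X Y by auto
        then show ?thesis using e by simp
      next
        case F2: False
        note Y = pb[OF y F2]
        have "h x = h y" using X Y e by simp
        moreover have "x \<in> {1..c+t} - A" "y \<in> {1..c+t} - A" using x y False F2 by auto
        ultimately show ?thesis using inj_onD[OF hinj] by blast
      qed
    qed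
  qed
  have "suited_coloring V E c t (\<pi> \<circ> \<Psi>)"
    unfolding suited_coloring_def proper_exp_coloring_def
  proof (intro conjI ballI allI impI)
    fix \<phi> assume "\<phi> \<in> exp_vertices V c"
    then show "(\<pi> \<circ> \<Psi>) \<phi> \<in> {1..c+t}" using rng pirng by auto
  next
    fix \<phi>1 \<phi>2 assume a: "exp_adj V E c \<phi>1 \<phi>2"
    then have "\<phi>1 \<in> exp_vertices V c" "\<phi>2 \<in> exp_vertices V c" unfolding exp_adj_def by auto
    then show "(\<pi> \<circ> \<Psi>) \<phi>1 \<noteq> (\<pi> \<circ> \<Psi>) \<phi>2"
      using prp[OF a] rng[OF \<open>\<phi>1 \<in> exp_vertices V c\<close>] rng[OF \<open>\<phi>2 \<in> exp_vertices V c\<close>] inj_onD[OF piinj] by auto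
  next
    fix \<phi> assume ph: "\<phi> \<in> exp_vertices V c"
    show "(\<pi> \<circ> \<Psi>) \<phi> \<in> \<phi> ` V \<union> {c+1..c+t}"
    proof (cases "\<Psi> \<phi> \<in> A")
      case True
      then obtain i where i: "i \<in> {1..c}" "\<Psi> \<phi> = f i" unfolding A_def by blast
      have "i \<in> \<phi> ` V"
      proof (rule ccontr)
        assume n: "i \<notin> \<phi> ` V"
        have "exp_adj V E c \<phi> (K i)"
          using ph Kv[OF i(1)] n unfolding exp_adj_def co_proper_def K_def by auto
        then show False using prp i(2) unfolding f_def by blast
      qed
      moreover have "\<pi> (\<Psi> \<phi>) = i" using piA[OF i(1)] i(2) by simp
      ultimately show ?thesis by simp
    next
      case False
      then show ?thesis using pb[OF rng[OF ph] False] by simp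
    qed
  qed
  then show ?thesis by blast
qed

end
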